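(* Let $N$ be a nonnegative integer random variable with $E[N]<\infty$ and let $p<1$. Let $\mathbf N=(N_i)_{i\in\mathbb{Z}}$ be i.i.d. with law $N$, and let each bond $(i,i+n)$, $1\le n\le N_i$, be open independently with probability $p$. Let $A$ be the event that there exist $i\ge1$ and $j\ge0$ such that $(-i,j)$ is a bond of $G_{\mathbf N}$ (i.e. $i+j\le N_{-i}$) and it is open. Then $P(A)<1$.
   Context: $G_{\mathbf N}$ is the oriented graph on $\mathbb{Z}$ with bonds $\{(i,i+n):i\in\mathbb{Z},\ 1\le n\le N_i\}$; given $\mathbf N$, bonds are open independently with probability $p$. *)

theory Defs
  imports "HOL-Probability.Probability"
begin

text \<open>Canonical probability space for the model: the first component is the
  i.i.d. family (N_i)_{i in Z} with law D; the second component gives, for every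
  i in Z and n in nat, an independent Bernoulli(p) coin O(i,n). The bond (i,i+n)
  (1 <= n <= N_i) is open iff O(i,n) holds. Given N, the present bonds are
  thus open independently with probability p.\<close>

definition bond_model :: "nat pmf \<Rightarrow> real \<Rightarrow> ((int \<Rightarrow> nat) \<times> (int \<times> nat \<Rightarrow> bool)) measure" where
  "bond_model D p =
     (PiM UNIV (\<lambda>_::int. measure_pmf D)) \<Otimes>\<^sub>M
     (PiM UNIV (\<lambda>_::int \<times> nat. measure_pmf (bernoulli_pmf p)))"

definition is_bond :: "(int \<Rightarrow> nat) \<Rightarrow> int \<Rightarrow> int \<Rightarrow> bool" where
  "is_bond Nv a b \<longleftrightarrow> 1 \<le> b - a \<and> b - a \<le> int (Nv a)"

definition is_open_bond :: "(int \<Rightarrow> nat) \<times> (int \<times> nat \<Rightarrow> bool) \<Rightarrow> int \<Rightarrow> int \<Rightarrow> bool" where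
  "is_open_bond w a b \<longleftrightarrow> is_bond (fst w) a b \<and> snd w (a, nat (b - a))"

definition event_A :: "((int \<Rightarrow> nat) \<times> (int \<times> nat \<Rightarrow> bool)) set" where
  "event_A = {w. \<exists>i::int. \<exists>j::int. i \<ge> 1 \<and> j \<ge> 0 \<and> is_open_bond w (-i) j}"

end

theory Submission
  imports Defs
begin

lemma summ_tail:
  fixes D :: "nat pmf"
  assumes "integrable (measure_pmf D) (\<lambda>n. real n)"
  shows "summable (\<lambda>k. measure_pmf.prob D {n. k < n})"
proof (rule summableI_nonneg_bounded)
  show "0 \<le> measure_pmf.prob D {n. k<n}" for k by simp
  fix m
  have ind: "(\<Sum>k<m. indicator {n. k<n} x) \<le> (real x)" for x :: nat
  proof -
    have "(\<Sum>k<m. indicator {n. k<n} x) \<le> real (min m x)"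
      by (induction m) (auto simp: indicator_def min_def split: if_splits)
    then show ?thesis by simp
  qed
  have ind2: "(\<Sum>k<m. indicator {n. k<n} x) \<le> (real m)" for x :: nat
  proof -
    have "(\<Sum>k<m. indicator {n. k<n} x) \<le> (\<Sum>k<m. (1::real))" by (rule sum_mono) (auto simp: indicator_def)
    then show ?thesis by simp
  qed
  have "(\<Sum>k<m. measure_pmf.prob D {n. k<n}) = (\<Sum>k<m. \<integral>x. indicator {n. k<n} x \<partial>D)" by simp
  also have "\<dots> = \<integral>x. (\<Sum>k<m. indicator {n. k<n} x) \<partial>D"
    by (rule Bochner_Integration.integral_sum[symmetric]) (auto intro!: measure_pmf.integrable_const_bound[where B=1])
  also have "\<dots> \<le> \<integral>x. real x \<partial>D"
    apply (rule integral_mono)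
    using assms ind ind2 by (auto intro!: AE_I2 measure_pmf.integrable_const_bound[where B="real m"] simp: sum_nonneg)
  finally show "(\<Sum>k<m. measure_pmf.prob D {n. k<n}) \<le> \<integral>x. real x \<partial>D" .
qed

lemma space_bm: "space (bond_model D p) = UNIV"
  by (simp add: bond_model_def space_pair_measure space_PiM)

lemma meas_A: "event_A \<in> sets (bond_model D p)"
proof -
  have e: "event_A = (\<Union>i\<in>{1::int..}. \<Union>n::nat. ({w. n \<ge> nat i \<and> n \<le> fst w (-i)} \<inter> {w. snd w (-i, n)}))"
    unfolding event_A_def is_open_bond_def is_bond_def
  proof (auto simp: set_eq_iff)
    fix a b i j assume "1 \<le> i" "0 \<le> j" "j + i \<le> int (a (- i))" "b (- i, nat (j + i))"
    then show "\<exists>x\<in>{1..}. \<exists>xa\<ge>nat x. xa \<le> a (- x) \<and> b (- x, xa)"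
      by (intro bexI[of _ i] exI[of _ "nat (j+i)"]) auto
  next
    fix a b x xa assume "1 \<le> x" "nat x \<le> xa" "xa \<le> a (- x)" "b (- x, xa)"
    then show "\<exists>i\<ge>1. \<exists>j\<ge>0. 1 \<le> j + i \<and> j + i \<le> int (a (- i)) \<and> b (- i, nat (j + i))"
      by (intro exI[of _ x] conjI exI[of _ "int xa - x"]) auto
  qed
  have f: "\<And>a k. {w. k \<le> fst w a} \<in> sets (bond_model D p)"
  proof -
    fix a k
    have "{w. k \<le> fst w a} = (\<lambda>w. fst w a) -` {k..} \<inter> space (bond_model D p)" by (auto simp: space_bm)
    also have "\<dots> \<in> sets (bond_model D p)" unfolding bond_model_def
      by (rule measurable_sets[where A="measure_pmf D"]) auto
    finally show "?thesis a k" .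
  qed
  have g: "\<And>a. {w. snd w a} \<in> sets (bond_model D p)"
  proof -
    fix a
    have "{w. snd w a} = (\<lambda>w. snd w a) -` {True} \<inter> space (bond_model D p)" by (auto simp: space_bm)
    also have "\<dots> \<in> sets (bond_model D p)" unfolding bond_model_def
      by (rule measurable_sets[where A="measure_pmf (bernoulli_pmf p)"]) auto
    finally show "?thesis a" .
  qed
  have h: "\<And>i n. {w. n \<ge> nat i \<and> n \<le> fst w (-i)} \<inter> {w. snd w (-i, n)} \<in> sets (bond_model D p)"
  proof -
    fix i n
    show "?thesis i n"
    proof (cases "n \<ge> nat i")
      case True
      then have "{w. n \<ge> nat i \<and> n \<le> fst w (-i)} = {w. n \<le> fst w (-i)}" by auto
      then show ?thesis using f g by (metis sets.Int)
    next
      case False then show ?thesis by auto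
    qed
  qed
  show ?thesis unfolding e
    by (intro sets.countable_UN' sets.countable_UN) (auto intro: h)
qed

lemma mainpart:
  fixes D :: "nat pmf" and p :: real
  assumes int: "integrable (measure_pmf D) (\<lambda>n. real n)"
    and p0: "0 \<le> p" and p1: "p < 1"
    and Am: "event_A \<in> sets (bond_model D p)"
  shows "measure (bond_model D p) event_A < 1"
proof -
  define M1 where "M1 = PiM (UNIV::int set) (\<lambda>_. measure_pmf D)"
  define M2 where "M2 = PiM (UNIV::(int\<times>nat) set) (\<lambda>_. measure_pmf (bernoulli_pmf p))"
  have bm: "bond_model D p = M1 \<Otimes>\<^sub>M M2" unfolding bond_model_def M1_def M2_def ..
  interpret Q1: product_prob_space "\<lambda>_::int. measure_pmf D" UNIV by unfold_locales
  interpret Q2: product_prob_space "\<lambda>_::int\<times>nat. measure_pmf (bernoulli_pmf p)" UNIV by unfold_locales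
  interpret P1: prob_space M1 unfolding M1_def by (rule prob_space_PiM) (simp add: prob_space_measure_pmf)
  interpret P2: prob_space M2 unfolding M2_def by (rule prob_space_PiM) (simp add: prob_space_measure_pmf)
  interpret P: pair_prob_space M1 M2 ..
  define r where "r k = measure_pmf.prob D {n. k < n}" for k
  have sr: "summable r" unfolding r_def by (rule summ_tail[OF int])
  have r0: "r k \<ge> 0" for k unfolding r_def by simp
  obtain K where K: "\<forall>n\<ge>K. norm (\<Sum>i. r (i+n)) < 1/4" using suminf_exist_split[OF _ sr, of "1/4"] by auto
  have "r \<longlonglongrightarrow> 0" by (rule summable_LIMSEQ_zero[OF sr])
  then have "eventually (\<lambda>n. r n < 1 / (4 * (real K + 1))) sequentially"
    by (rule order_tendstoD) simp
  then obtain M where M: "r M < 1 / (4 * (real K + 1))" by (auto simp: eventually_sequentially)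
  have KM: "real K * r M < 1/4"
  proof -
    have "real K * r M \<le> (real K + 1) * r M" using r0[of M] by (simp add: mult_right_mono)
    also have "\<dots> < (real K + 1) * (1 / (4 * (real K + 1)))"
      using M by (intro mult_strict_left_mono) auto
    also have "\<dots> = 1/4" by simp
    finally show ?thesis .
  qed
  define T where "T k = (if k < K then {n. M < n} else {n. k < n})" for k
  define B where "B k = {f\<in>space M1. f (-(int k+1)) \<in> T k}" for k
  have Bm: "B k \<in> sets M1" for k unfolding B_def M1_def by (rule sets_Collect_single') auto
  have PB: "P1.prob (B k) = (if k<K then r M else r k)" for k
  proof -
    have "emeasure M1 (B k) = emeasure (measure_pmf D) (T k)"
      unfolding B_def M1_def by (rule Q1.emeasure_PiM_Collect_single) auto
    then have "P1.prob (B k) = measure_pmf.prob D (T k)"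
      by (simp add: P1.emeasure_eq_measure measure_pmf.emeasure_eq_measure)
    then show ?thesis by (simp add: T_def r_def)
  qed
  define b where "b k = (if k<K then r M else 0)" for k
  define c where "c k = (if k<K then 0 else r k)" for k
  have bc: "P1.prob (B k) = b k + c k" for k by (simp add: PB b_def c_def)
  have sb: "b sums (\<Sum>k<K. b k)" by (rule sums_finite) (auto simp: b_def)
  have sc: "summable c" by (rule summable_comparison_test[OF _ sr]) (auto simp: c_def r0)
  have sumb: "(\<Sum>k<K. b k) = real K * r M" by (simp add: b_def)
  have sumc: "suminf c = (\<Sum>i. r (i+K))"
    using suminf_split_initial_segment[OF sc, of K] by (simp add: c_def)
  have sumc2: "suminf c < 1/4" using K sumc by auto
  have sB: "summable (\<lambda>k. P1.prob (B k))" unfolding bc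
    using sb sc by (intro summable_add) (auto simp: sums_iff)
  have "P1.prob (\<Union>k. B k) \<le> (\<Sum>k. P1.prob (B k))"
    by (rule P1.finite_measure_subadditive_countably) (use Bm sB in auto)
  also have "\<dots> = (\<Sum>k<K. b k) + suminf c" unfolding bc
    using sb sc by (simp add: suminf_add[symmetric] sums_iff)
  finally have PU: "P1.prob (\<Union>k. B k) < 1/2" using sumb KM sumc2 by linarith
  define E1 where "E1 = space M1 - (\<Union>k. B k)"
  have E1m: "E1 \<in> sets M1" unfolding E1_def using Bm by auto
  have PE1: "P1.prob E1 > 0"
  proof -
    have "P1.prob E1 = 1 - P1.prob (\<Union>k. B k)" unfolding E1_def
      by (rule P1.prob_compl) (use Bm in auto)
    then show ?thesis using PU by linarith
  qed
  define J where "J = (\<lambda>(i,n). (-(int i), n)) ` ({1..K} \<times> {1..M})"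
  have Jf: "finite J" unfolding J_def by auto
  define E2 where "E2 = {g\<in>space M2. \<forall>j\<in>J. g j \<in> {False}}"
  have E2e: "E2 = {g\<in>space M2. \<forall>j\<in>J. \<not> g j}" unfolding E2_def by auto
  have E2m: "E2 \<in> sets M2" unfolding E2e M2_def
    by (rule sets.sets_Collect_finite_All[OF _ Jf]) (auto intro!: sets_Collect_single)
  have "emeasure M2 E2 = (\<Prod>j\<in>J. emeasure (measure_pmf (bernoulli_pmf p)) {False})"
    unfolding E2_def M2_def by (rule Q2.emeasure_PiM_Collect) (auto simp: Jf)
  also have "\<dots> = ennreal ((1-p) ^ card J)"
    using p0 p1 by (simp add: emeasure_pmf_single prod_ennreal ennreal_power)
  finally have "P2.prob E2 = (1-p) ^ card J"
    using p1 by (simp add: P2.emeasure_eq_measure)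
  then have PE2: "P2.prob E2 > 0" using p1 by simp
  have Pm: "E1 \<times> E2 \<in> sets (M1 \<Otimes>\<^sub>M M2)" using E1m E2m by auto
  have PE: "measure (M1 \<Otimes>\<^sub>M M2) (E1 \<times> E2) > 0"
  proof -
    have "emeasure (M1 \<Otimes>\<^sub>M M2) (E1 \<times> E2) = emeasure M1 E1 * emeasure M2 E2"
      by (rule P2.emeasure_pair_measure_Times[OF E1m E2m])
    then have "measure (M1 \<Otimes>\<^sub>M M2) (E1 \<times> E2) = P1.prob E1 * P2.prob E2"
      by (simp add: P.emeasure_eq_measure P1.emeasure_eq_measure P2.emeasure_eq_measure flip: ennreal_mult)
    then show ?thesis using PE1 PE2 by simp
  qed
  have disj: "event_A \<inter> (E1 \<times> E2) = {}"
  proof (rule ccontr)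
    assume "event_A \<inter> (E1 \<times> E2) \<noteq> {}"
    then obtain f g where w: "(f,g) \<in> event_A" "f \<in> E1" "g \<in> E2" by auto
    then obtain i j where ij: "i \<ge> 1" "j \<ge> 0" "1 \<le> j + i" "j + i \<le> int (f (-i))" "g (-i, nat (j+i))"
      by (auto simp: event_A_def is_open_bond_def is_bond_def)
    define k where "k = nat i - 1"
    have ik: "i = int k + 1" using ij unfolding k_def by auto
    have "f \<notin> B k" using w(2) unfolding E1_def by auto
    moreover have "f \<in> space M1" using w(2) unfolding E1_def by auto
    ultimately have nB: "f (-(int k+1)) \<notin> T k" unfolding B_def by auto
    show False
    proof (cases "k < K")
      case True
      then have le: "f (-i) \<le> M" using nB ik by (auto simp: T_def)
      have "(-i, nat (j+i)) \<in> J" unfolding J_def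
        apply (rule image_eqI[where x="(k+1, nat (j+i))"])
        using ij ik le True by auto
      then show False using w(3) ij(5) unfolding E2_def by auto
    next
      case False
      then have "f (-i) \<le> k" using nB ik by (auto simp: T_def)
      then show False using ij ik by linarith
    qed
  qed
  have "measure (M1 \<Otimes>\<^sub>M M2) event_A + measure (M1 \<Otimes>\<^sub>M M2) (E1 \<times> E2)
      = measure (M1 \<Otimes>\<^sub>M M2) (event_A \<union> (E1 \<times> E2))"
    using Am Pm disj bm by (intro P.finite_measure_Union[symmetric]) auto
  also have "\<dots> \<le> 1" by (rule P.prob_le_1)
  finally show ?thesis using PE bm by simp
qed

theorem mainTheorem7:
  fixes D :: "nat pmf" and p :: real
  assumes "integrable (measure_pmf D) (\<lambda>n. real n)"
    and "0 \<le> p" and "p < 1"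
  shows "event_A \<in> sets (bond_model D p) \<and> measure (bond_model D p) event_A < 1"
  using meas_A mainpart[OF assms meas_A] by blast

end
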